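(* For $s>0$ define polynomials $P_m(u,v;s)$, $Q_m(u,v;s)$, $m\ge1$, by $P_1(u,v;s)=-2su$, $Q_1(u,v;s)=-2sv$ and $$P_{m+1}(u,v;s)=(u^2+v^2)\frac{\partial P_m}{\partial u}(u,v;s)-2(s+m)uP_m(u,v;s),$$ $$Q_{m+1}(u,v;s)=(u^2+v^2)\frac{\partial Q_m}{\partial v}(u,v;s)-2(s+m)vQ_m(u,v;s).$$ Then for all $(u,v)\in\mathbb{R}^2\setminus\{(0,0)\}$, all $s>0$ and all positive integers $m$, $P_m(u,v;s)=Q_m(v,u;s)$. *)

theory Defs
  imports "HOL-Analysis.Analysis"
begin

text \<open>P s m u v stands for P_m(u,v;s); partial derivatives are the ordinary
derivatives of the (polynomial, hence smooth) functions in one variable.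
Index 0 is unused (set to 0); the paper's sequence starts at m = 1.\<close>

fun P :: "real \<Rightarrow> nat \<Rightarrow> real \<Rightarrow> real \<Rightarrow> real" where
  "P s 0 u v = 0"
| "P s (Suc 0) u v = - 2 * s * u"
| "P s (Suc (Suc m)) u v =
     (u^2 + v^2) * deriv (\<lambda>x. P s (Suc m) x v) u
     - 2 * (s + real (Suc m)) * u * P s (Suc m) u v"

fun Q :: "real \<Rightarrow> nat \<Rightarrow> real \<Rightarrow> real \<Rightarrow> real" where
  "Q s 0 u v = 0"
| "Q s (Suc 0) u v = - 2 * s * v"
| "Q s (Suc (Suc m)) u v =
     (u^2 + v^2) * deriv (\<lambda>y. Q s (Suc m) u y) v
     - 2 * (s + real (Suc m)) * v * Q s (Suc m) u v"

end

theory Submission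
  imports Defs
begin

lemma PQ_all: "\<forall>u v. P s m u v = Q s m v u"
proof (induction m rule: nat_less_induct)
  case (1 n)
  show ?case
  proof (cases n)
    case 0 then show ?thesis by simp
  next
    case (Suc k)
    show ?thesis
    proof (cases k)
      case 0 then show ?thesis using Suc by simp
    next
      case (Suc j)
      have IH: "\<forall>u v. P s (Suc j) u v = Q s (Suc j) v u"
        using 1 \<open>n = Suc k\<close> Suc by simp
      have F: "\<And>v. (\<lambda>x. P s (Suc j) x v) = (\<lambda>y. Q s (Suc j) v y)"
        using IH by auto
      show ?thesis using \<open>n = Suc k\<close> Suc IH F by (simp add: add.commute)
    qed
  qed
qed

theorem lemma5p5:
  fixes u v s :: real and m :: nat
  assumes "(u, v) \<noteq> (0, 0)" and "s > 0" and "m \<ge> 1"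
  shows "P s m u v = Q s m v u"
  using PQ_all by blast

end
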